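(* Let $\gamma,\alpha,\beta$ be real constants and $\phi\in[0,1]$. Let $X$ be a random variable with values in $\mathbb{N}=\{0,1,2,\dots\}$ whose probability generating function satisfies $$g_X(s)=E[s^X]=h\big(\alpha+\beta(1-\phi s)^\gamma\big),\qquad s\in[0,1],$$ where $h$ is a real function analytic in a neighbourhood of $\alpha+\beta$. Then for every $k\in\mathbb{N}$, $$P(X=k)=(-\phi)^k\sum_{m=0}^k\frac{(-\beta)^m}{m!}\,h^{(m)}(\alpha+\beta)\,C_{\gamma,m}(k),$$ where $h^{(m)}$ denotes the $m$-th derivative of $h$ and $$C_{\gamma,m}(k)=\sum_{j=0}^m(-1)^j\binom{m}{j}\binom{\gamma j}{k}.$$
   Context: For real $x$ and $k\in\mathbb{N}$, $\binom{x}{k}=x(x-1)\cdots(x-k+1)/k!$ (with $\binom{x}{0}=1$). *)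

theory Defs
  imports "HOL-Analysis.Analysis" "HOL-Probability.Probability_Mass_Function"
begin

definition real_analytic_at :: "(real \<Rightarrow> real) \<Rightarrow> real \<Rightarrow> bool" where
  "real_analytic_at h x0 \<longleftrightarrow>
     (\<exists>r>0. \<exists>c :: nat \<Rightarrow> real. \<forall>x. \<bar>x - x0\<bar> < r \<longrightarrow> (\<lambda>n. c n * (x - x0) ^ n) sums h x)"

definition C_coeff :: "real \<Rightarrow> nat \<Rightarrow> nat \<Rightarrow> real" where
  "C_coeff \<gamma> m k = (\<Sum>j\<le>m. (-1) ^ j * real (m choose j) * ((\<gamma> * real j) gchoose k))"

end

theory Submission
  imports Defs
begin


lemma real_fps_nth_conv_deriv:
  fixes F :: "real fps"
  assumes "fps_conv_radius F > 0"
  shows "(deriv ^^ n) (\<lambda>x. eval_fps F (x - a)) a = fact n * fps_nth F n"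
  using assms
proof (induction n arbitrary: F)
  case 0
  thus ?case by (simp add: eval_fps_at_0)
next
  case (Suc n F)
  obtain \<rho> :: real where rho: "0 < \<rho>" "ereal \<rho> < fps_conv_radius F"
    using ereal_dense2[OF Suc.prems] by (metis ereal_less(2) less_ereal.simps(1) order_less_trans
        zero_ereal_def Suc.prems ereal_dense2 dual_order.strict_trans2 order_le_less)
  have "(deriv ^^ Suc n) (\<lambda>x. eval_fps F (x - a)) a = (deriv ^^ n) (deriv (\<lambda>x. eval_fps F (x - a))) a"
    unfolding funpow_Suc_right o_def ..
  also have "eventually (\<lambda>x. x \<in> ball a \<rho>) (nhds a)"
    using rho by (intro eventually_nhds_in_open) auto
  hence "eventually (\<lambda>x. deriv (\<lambda>x. eval_fps F (x - a)) x = eval_fps (fps_deriv F) (x - a)) (nhds a)"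
  proof eventually_elim
    case (elim x)
    have "norm (x - a) < fps_conv_radius F" using elim rho
      by (simp add: dist_norm) (metis abs_minus_commute ereal_less(3) less_ereal.simps(1) order_less_trans)
    hence "((\<lambda>x. eval_fps F (x - a)) has_field_derivative eval_fps (fps_deriv F) (x - a) * 1) (at x)"
      by (intro DERIV_chain2[OF has_field_derivative_eval_fps]) (auto intro!: derivative_eq_intros)
    thus ?case by (intro DERIV_imp_deriv) simp
  qed
  hence "(deriv ^^ n) (deriv (\<lambda>x. eval_fps F (x - a))) a = (deriv ^^ n) (\<lambda>x. eval_fps (fps_deriv F) (x - a)) a"
    by (intro higher_deriv_cong_ev refl)
  also have "\<dots> = fact n * fps_nth (fps_deriv F) n"
    using Suc.prems fps_conv_radius_deriv[of F] by (intro Suc.IH) auto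
  also have "\<dots> = fact (Suc n) * fps_nth F (Suc n)"
    by (simp add: fps_deriv_def algebra_simps)
  finally show ?case .
qed




lemma fps_low_coeffs_zero:
  fixes D :: "real fps" and W :: "real \<Rightarrow> real"
  assumes rad: "fps_conv_radius D > 0"
    and W: "(W \<longlongrightarrow> w0) (at_right 0)"
    and ev: "eventually (\<lambda>s. eval_fps D s = s ^ K * W s) (at_right 0)"
  shows "n < K \<Longrightarrow> fps_nth D n = 0"
proof (induction n rule: less_induct)
  case (less n)
  have cut: "fps_cutoff n D = 0"
    using less by (simp add: fps_eq_iff)
  define E where "E = fps_shift n D"
  have DE: "D = fps_X ^ n * E"
    using fps_shift_cutoff'[of n D] cut by (simp add: E_def)
  have radE: "fps_conv_radius E > 0" using rad by (simp add: E_def)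
  have ev2: "eventually (\<lambda>s. eval_fps E s = s ^ (K - n) * W s) (at_right 0)"
  proof -
    have "eventually (\<lambda>s::real. s > 0) (at_right 0)" by (simp add: eventually_at_right_less)
    moreover have "eventually (\<lambda>s::real. s \<in> ball 0 1 \<and> ereal (norm s) < fps_conv_radius E) (nhds 0)"
    proof -
      obtain \<rho> :: real where rho: "0 < \<rho>" "ereal \<rho> < fps_conv_radius E"
        using ereal_dense2[OF radE] by (metis ereal_less(2) order_less_trans zero_ereal_def
            dual_order.strict_trans2 order_le_less ereal_dense2 radE less_ereal.simps(1))
      have "eventually (\<lambda>s::real. s \<in> ball 0 (min 1 \<rho>)) (nhds 0)"
        using rho by (intro eventually_nhds_in_open) auto
      thus ?thesis
        by eventually_elim (use rho in \<open>auto simp: dist_norm intro: order_less_trans[of _ "ereal \<rho>"]\<close>)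
    qed
    hence "eventually (\<lambda>s::real. s \<in> ball 0 1 \<and> ereal (norm s) < fps_conv_radius E) (at_right 0)"
      by (rule filter_leD[OF at_within_le_nhds])
    ultimately show ?thesis using ev
    proof eventually_elim
      case (elim s)
      have "eval_fps D s = s ^ n * eval_fps E s"
        using elim by (simp add: DE eval_fps_mult)
      moreover have "s ^ K = s ^ n * s ^ (K - n)" using less(2)
        by (simp add: power_add[symmetric])
      ultimately show ?case using elim by simp
    qed
  qed
  have "((\<lambda>s. s ^ (K - n) * W s) \<longlongrightarrow> 0 ^ (K - n) * w0) (at_right 0)"
    by (intro tendsto_intros W)
  have "((\<lambda>s. s ^ (K - n) * W s) \<longlongrightarrow> 0) (at_right 0)"
  proof -
    have "(0::real) ^ (K - n) * w0 = 0" using less(2) by simp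
    thus ?thesis using \<open>((\<lambda>s. s ^ (K - n) * W s) \<longlongrightarrow> 0 ^ (K - n) * w0) (at_right 0)\<close> by (simp only:)
  qed
  hence "(eval_fps E \<longlongrightarrow> 0) (at_right 0)"
    by (subst tendsto_cong[OF ev2])
  moreover have "(eval_fps E \<longlongrightarrow> eval_fps E 0) (at_right 0)"
    using continuous_eval_fps[of 0 E "{0<..}"] radE
    by (simp add: continuous_within zero_ereal_def)
  ultimately have "eval_fps E 0 = 0"
    using tendsto_unique[OF trivial_limit_at_right_real] by blast
  thus ?case by (simp add: eval_fps_at_0 E_def)
qed




definition Bfps :: "real \<Rightarrow> real \<Rightarrow> real fps" where
  "Bfps \<phi> \<gamma> = Abs_fps (\<lambda>n. (\<gamma> gchoose n) * (-\<phi>) ^ n)"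

lemma Bfps_power: "Bfps \<phi> \<gamma> ^ j = Abs_fps (\<lambda>n. ((\<gamma> * of_nat j) gchoose n) * (-\<phi>) ^ n)"
proof (induction j)
  case 0
  show ?case by (simp add: fps_eq_iff gbinomial_0_left)
next
  case (Suc j)
  have "Bfps \<phi> \<gamma> ^ Suc j = Bfps \<phi> \<gamma> * Bfps \<phi> \<gamma> ^ j" by simp
  also have "\<dots> = Abs_fps (\<lambda>n. ((\<gamma> * of_nat (Suc j)) gchoose n) * (-\<phi>) ^ n)"
  proof (rule fps_ext)
    fix n
    have "fps_nth (Bfps \<phi> \<gamma> * Bfps \<phi> \<gamma> ^ j) n =
        (\<Sum>i=0..n. ((\<gamma> gchoose i) * ((\<gamma> * of_nat j) gchoose (n - i))) * (-\<phi>) ^ n)"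
      unfolding Suc fps_mult_nth
      by (intro sum.cong refl) (simp add: Bfps_def algebra_simps power_add[symmetric])
    also have "\<dots> = ((\<gamma> + \<gamma> * of_nat j) gchoose n) * (-\<phi>) ^ n"
      by (simp add: sum_distrib_right[symmetric] gbinomial_Vandermonde)
    finally show "fps_nth (Bfps \<phi> \<gamma> * Bfps \<phi> \<gamma> ^ j) n = fps_nth (Abs_fps (\<lambda>n. ((\<gamma> * of_nat (Suc j)) gchoose n) * (-\<phi>) ^ n)) n"
      by (simp add: algebra_simps)
  qed
  finally show ?case .
qed

lemma Bfps_sums:
  assumes "0 \<le> \<phi>" "\<phi> \<le> 1" "\<bar>s\<bar> < 1"
  shows "(\<lambda>n. fps_nth (Bfps \<phi> \<gamma>) n * s ^ n) sums ((1 - \<phi> * s) powr \<gamma>)"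
proof -
  have ab: "\<bar>-\<phi> * s\<bar> < 1" using assms
    by (simp add: abs_mult) (smt (verit) abs_ge_zero mult_left_le_one_le mult_less_cancel_left)
  have eq: "(\<lambda>n. fps_nth (Bfps \<phi> \<gamma>) n * s ^ n) = (\<lambda>n. (\<gamma> gchoose n) * (-\<phi> * s) ^ n)"
    by (intro ext) (simp add: Bfps_def power_mult_distrib[symmetric])
  from gen_binomial_real[OF ab, of \<gamma>] show ?thesis
    unfolding eq by simp
qed

lemma Bfps_rad:
  assumes "0 \<le> \<phi>" "\<phi> \<le> 1"
  shows "fps_conv_radius (Bfps \<phi> \<gamma>) \<ge> 1"
  unfolding fps_conv_radius_def
proof (rule conv_radius_geI_ex')
  fix r :: real assume "0 < r" "ereal r < 1"
  hence "\<bar>r\<bar> < 1" by simp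
  from Bfps_sums[OF assms this] show "summable (\<lambda>n. fps_nth (Bfps \<phi> \<gamma>) n * of_real r ^ n)"
    by (auto simp: sums_iff)
qed

lemma Bfps_eval:
  assumes "0 \<le> \<phi>" "\<phi> \<le> 1" "\<bar>s\<bar> < 1"
  shows "eval_fps (Bfps \<phi> \<gamma>) s = (1 - \<phi> * s) powr \<gamma>"
  using Bfps_sums[OF assms] unfolding eval_fps_def by (simp add: sums_iff)

lemma eval_fps_sum_aux:
  fixes F :: "'i \<Rightarrow> real fps"
  assumes "finite I" "\<And>i. i \<in> I \<Longrightarrow> ereal (norm z) < fps_conv_radius (F i)"
  shows "eval_fps (\<Sum>i\<in>I. F i) z = (\<Sum>i\<in>I. eval_fps (F i) z) \<and> ereal (norm z) < fps_conv_radius (\<Sum>i\<in>I. F i)"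
  using assms
proof (induction I rule: finite_induct)
  case empty
  show ?case by simp
next
  case (insert x I)
  have r1: "ereal (norm z) < fps_conv_radius (F x)" using insert by simp
  have r2: "ereal (norm z) < fps_conv_radius (\<Sum>i\<in>I. F i)" and e: "eval_fps (\<Sum>i\<in>I. F i) z = (\<Sum>i\<in>I. eval_fps (F i) z)"
    using insert by auto
  have "ereal (norm z) < fps_conv_radius (F x + (\<Sum>i\<in>I. F i))"
    using r1 r2 fps_conv_radius_add[of "F x" "\<Sum>i\<in>I. F i"] by (meson min_less_iff_conj order_less_le_trans)
  thus ?case using insert r1 r2 e by (simp add: eval_fps_add)
qed




lemma neg1_pow_diff: "j \<le> m \<Longrightarrow> (-1::real) ^ (m - j) = (-1) ^ m * (-1) ^ j"
proof -
  assume "j \<le> m"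
  hence "(-1::real) ^ m = (-1) ^ (m - j) * (-1) ^ j" by (simp add: power_add[symmetric])
  hence "(-1::real) ^ m * (-1) ^ j = (-1) ^ (m - j) * ((-1) ^ j * (-1) ^ j)" by simp
  also have "(-1::real) ^ j * (-1) ^ j = 1" by (simp add: power_add[symmetric])
  finally show ?thesis by simp
qed

lemma Bm1_power_nth:
  "fps_nth ((Bfps \<phi> \<gamma> - 1) ^ m) k = (-\<phi>) ^ k * (-1) ^ m * C_coeff \<gamma> m k"
proof -
  have "(Bfps \<phi> \<gamma> - 1) ^ m = (Bfps \<phi> \<gamma> + fps_const (-1)) ^ m" by (simp add: fps_const_neg[symmetric])
  also have "\<dots> = (\<Sum>j\<le>m. fps_const (of_nat (m choose j) * (-1) ^ (m - j)) * Bfps \<phi> \<gamma> ^ j)"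
    unfolding binomial_ring
    by (intro sum.cong refl) (simp add: fps_const_power fps_of_nat mult_ac fps_const_mult[symmetric])
  finally have "fps_nth ((Bfps \<phi> \<gamma> - 1) ^ m) k =
      (\<Sum>j\<le>m. of_nat (m choose j) * (-1) ^ (m - j) * (((\<gamma> * of_nat j) gchoose k) * (-\<phi>) ^ k))"
    by (simp add: fps_sum_nth Bfps_power)
  also have "\<dots> = (\<Sum>j\<le>m. (-\<phi>) ^ k * (-1) ^ m * ((-1) ^ j * real (m choose j) * ((\<gamma> * real j) gchoose k)))"
    by (intro sum.cong refl) (simp add: neg1_pow_diff)
  also have "\<dots> = (-\<phi>) ^ k * (-1) ^ m * C_coeff \<gamma> m k"
    unfolding C_coeff_def by (simp add: sum_distrib_left)
  finally show ?thesis .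
qed




theorem mainTheorem1:
  fixes \<gamma> \<alpha> \<beta> \<phi> :: real and p :: "nat pmf" and h :: "real \<Rightarrow> real"
  assumes "0 \<le> \<phi>" "\<phi> \<le> 1"
    and "real_analytic_at h (\<alpha> + \<beta>)"
    and "\<forall>s\<in>{0..1}. (\<Sum>k. pmf p k * s ^ k) = h (\<alpha> + \<beta> * (1 - \<phi> * s) powr \<gamma>)"
  shows "\<forall>k. pmf p k = (- \<phi>) ^ k *
           (\<Sum>m\<le>k. (- \<beta>) ^ m / fact m * (deriv ^^ m) h (\<alpha> + \<beta>) * C_coeff \<gamma> m k)"
proof
  fix k :: nat
  note phi = assms(1,2)
  define x0 where "x0 = \<alpha> + \<beta>"
  obtain r c where r: "r > 0" and hc: "\<And>x. \<bar>x - x0\<bar> < r \<Longrightarrow> (\<lambda>n. c n * (x - x0) ^ n) sums h x"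
    using assms(3) unfolding real_analytic_at_def x0_def by blast
  define H where "H = Abs_fps c"
  have radH: "fps_conv_radius H \<ge> ereal r"
    unfolding fps_conv_radius_def H_def fps_nth_Abs_fps
  proof (rule conv_radius_geI_ex')
    fix \<rho> :: real assume "0 < \<rho>" "ereal \<rho> < ereal r"
    hence "\<bar>(x0 + \<rho>) - x0\<bar> < r" by simp
    from hc[OF this] show "summable (\<lambda>n. c n * of_real \<rho> ^ n)" by (simp add: sums_iff)
  qed
  have "ereal 0 < ereal r" using r by simp
  hence radH0: "fps_conv_radius H > 0" using radH unfolding zero_ereal_def by (rule order_less_le_trans)
  have hH: "h x = eval_fps H (x - x0)" if "\<bar>x - x0\<bar> < r" for x
    using hc[OF that] unfolding eval_fps_def H_def by (simp add: sums_iff)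
  have dh: "(deriv ^^ m) h x0 = fact m * c m" for m
  proof -
    have "eventually (\<lambda>x. x \<in> ball x0 r) (nhds x0)"
      using r by (intro eventually_nhds_in_open) auto
    hence "eventually (\<lambda>x. h x = eval_fps H (x - x0)) (nhds x0)"
      by eventually_elim (simp add: hH dist_norm abs_minus_commute)
    hence "(deriv ^^ m) h x0 = (deriv ^^ m) (\<lambda>x. eval_fps H (x - x0)) x0"
      by (intro higher_deriv_cong_ev refl)
    also have "\<dots> = fact m * fps_nth H m"
      using radH0 by (rule real_fps_nth_conv_deriv)
    finally show ?thesis by (simp add: H_def)
  qed
  define K where "K = Suc k"
  define S where "S = fps_shift K H"
  have radS: "fps_conv_radius S \<ge> ereal r" using radH by (simp add: S_def)
  have hsplit: "h (x0 + y) = (\<Sum>m<K. c m * y ^ m) + y ^ K * eval_fps S y" if y: "\<bar>y\<bar> < r" for y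
  proof -
    have s1: "(\<lambda>n. c n * y ^ n) sums h (x0 + y)" using hc[of "x0 + y"] y by simp
    hence s2: "(\<lambda>i. c (i + K) * y ^ (i + K)) sums (h (x0 + y) - (\<Sum>m<K. c m * y ^ m))"
      by (subst sums_iff_shift) simp
    have "ereal (norm y) < ereal r" using y by simp
    hence "norm y < fps_conv_radius S" using radS by (rule order_less_le_trans)
    hence "(\<lambda>i. fps_nth S i * y ^ i) sums eval_fps S y" by (rule sums_eval_fps)
    hence "(\<lambda>i. y ^ K * (fps_nth S i * y ^ i)) sums (y ^ K * eval_fps S y)" by (rule sums_mult)
    moreover have "(\<lambda>i. y ^ K * (fps_nth S i * y ^ i)) = (\<lambda>i. c (i + K) * y ^ (i + K))"
      by (intro ext) (simp add: S_def H_def power_add mult_ac)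
    ultimately have "(\<lambda>i. c (i + K) * y ^ (i + K)) sums (y ^ K * eval_fps S y)" by simp
    with s2 have "h (x0 + y) - (\<Sum>m<K. c m * y ^ m) = y ^ K * eval_fps S y"
      using sums_unique2 by blast
    thus ?thesis by simp
  qed

  define B where "B = Bfps \<phi> \<gamma>"
  define U where "U = B - 1"
  define V where "V = fps_shift 1 U"
  have radB: "fps_conv_radius B \<ge> 1" unfolding B_def by (rule Bfps_rad[OF phi])
  have radU: "fps_conv_radius U \<ge> 1"
    using fps_conv_radius_diff[of B 1] radB by (simp add: U_def)
  have radV: "fps_conv_radius V \<ge> 1" using radU by (simp add: V_def)
  have U0: "fps_nth U 0 = 0" by (simp add: U_def B_def Bfps_def)
  have UV: "U = fps_X * V"
  proof -
    have "fps_cutoff 1 U = 0" using U0 by (simp add: fps_eq_iff)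
    thus ?thesis using fps_shift_cutoff'[of 1 U] by (simp add: V_def)
  qed
  have lt1: "ereal \<bar>s\<bar> < e" if "\<bar>s\<bar> < 1" "1 \<le> e" for s :: real and e
    using that by (metis ereal_less(3) less_ereal.simps(1) order_less_le_trans one_ereal_def)
  have evalU: "eval_fps U s = (1 - \<phi> * s) powr \<gamma> - 1" if "\<bar>s\<bar> < 1" for s
    using that lt1[OF that radB] by (simp add: U_def eval_fps_diff B_def Bfps_eval[OF phi])
  have evalUV: "eval_fps U s = s * eval_fps V s" if "\<bar>s\<bar> < 1" for s
    using that lt1[OF that radV] by (simp add: UV eval_fps_mult)
  define A where "A = (\<Sum>m<K. fps_const (c m * \<beta> ^ m) * U ^ m)"
  have evalA: "eval_fps A s = (\<Sum>m<K. c m * (\<beta> * eval_fps U s) ^ m) \<and> ereal (norm s) < fps_conv_radius A"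
    if s: "\<bar>s\<bar> < 1" for s
  proof -
    have r1: "ereal (norm s) < fps_conv_radius (fps_const (c m * \<beta> ^ m) * U ^ m)" for m
    proof -
      have "ereal (norm s) < fps_conv_radius (U ^ m)"
        using lt1[OF s order_trans[OF radU fps_conv_radius_power]] by simp
      thus ?thesis using fps_conv_radius_mult[of "fps_const (c m * \<beta> ^ m)" "U ^ m"]
        by (simp add: order_less_le_trans)
    qed
    have "eval_fps (fps_const (c m * \<beta> ^ m) * U ^ m) s = c m * (\<beta> * eval_fps U s) ^ m" for m
    proof -
      have "ereal (norm s) < fps_conv_radius U" using lt1[OF s radU] by simp
      hence "eval_fps (U ^ m) s = eval_fps U s ^ m" by (rule eval_fps_power)
      moreover have "ereal (norm s) < fps_conv_radius (U ^ m)"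
        using lt1[OF s order_trans[OF radU fps_conv_radius_power]] by simp
      ultimately show ?thesis by (simp add: eval_fps_mult power_mult_distrib)
    qed
    with eval_fps_sum_aux[of "{..<K}" s "\<lambda>m. fps_const (c m * \<beta> ^ m) * U ^ m"] r1
    show ?thesis by (simp add: A_def)
  qed
  define P where "P = Abs_fps (\<lambda>n. pmf p n)"
  have radP: "fps_conv_radius P \<ge> 1"
    unfolding fps_conv_radius_def P_def fps_nth_Abs_fps
  proof (rule conv_radius_geI_ex')
    fix \<rho> :: real assume "0 < \<rho>" "ereal \<rho> < 1"
    hence \<rho>: "0 < \<rho>" "\<rho> < 1" by auto
    show "summable (\<lambda>n. pmf p n * of_real \<rho> ^ n)"
    proof (rule summable_comparison_test)
      show "\<exists>N. \<forall>n\<ge>N. norm (pmf p n * of_real \<rho> ^ n) \<le> \<rho> ^ n"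
        using \<rho> by (auto intro!: mult_left_le_one_le simp: pmf_le_1 abs_mult)
      show "summable (\<lambda>n. \<rho> ^ n)" using \<rho> by (intro summable_geometric) simp
    qed
  qed
  define D where "D = P - A"
  have radD: "fps_conv_radius D > 0"
  proof -
    have "ereal (norm (1/2::real)) < fps_conv_radius A" using evalA[of "1/2"] by simp
    moreover have "ereal (norm (1/2::real)) < fps_conv_radius P" using lt1[of "1/2", OF _ radP] by simp
    ultimately have "ereal (norm (1/2::real)) < fps_conv_radius D"
      using fps_conv_radius_diff[of P A] unfolding D_def by (meson min_less_iff_conj order_less_le_trans)
    thus ?thesis by (rule order_le_less_trans[rotated]) simp
  qed
  define v where "v = eval_fps V"
  define W where "W = (\<lambda>s. (\<beta> * v s) ^ K * eval_fps S (\<beta> * s * v s))"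
  have contW: "isCont W 0"
  proof -
    have "0 < fps_conv_radius V" using radV by (rule order_less_le_trans[rotated]) simp
    hence cv: "isCont v 0" unfolding v_def
      using continuous_eval_fps[of 0 V UNIV] by (simp add: zero_ereal_def[symmetric])
    have "ereal 0 < ereal r" using r by simp
    hence "ereal 0 < fps_conv_radius S" using radS by (rule order_less_le_trans)
    hence "isCont (eval_fps S) ((\<lambda>s. \<beta> * s * v s) 0)"
      using continuous_eval_fps[of 0 S UNIV] by simp
    moreover have ci: "isCont (\<lambda>s. \<beta> * s * v s) 0" by (intro continuous_intros cv)
    ultimately have "isCont (\<lambda>s. eval_fps S (\<beta> * s * v s)) 0"
      using isCont_o2[OF ci] by blast
    thus ?thesis unfolding W_def by (intro continuous_intros cv)
  qed
  hence limW: "(W \<longlongrightarrow> W 0) (at_right 0)"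
    unfolding isCont_def by (rule tendsto_mono[OF at_le, rotated]) simp
  have evU0: "eventually (\<lambda>s. \<bar>\<beta> * eval_fps U s\<bar> < r) (at_right 0)"
  proof -
    have "0 < fps_conv_radius U" using radU by (rule order_less_le_trans[rotated]) simp
    hence "isCont (eval_fps U) 0"
      using continuous_eval_fps[of 0 U UNIV] by (simp add: zero_ereal_def[symmetric])
    hence "((\<lambda>s. \<bar>\<beta> * eval_fps U s\<bar>) \<longlongrightarrow> \<bar>\<beta> * eval_fps U 0\<bar>) (at 0)"
      unfolding isCont_def by (intro tendsto_intros)
    hence "((\<lambda>s. \<bar>\<beta> * eval_fps U s\<bar>) \<longlongrightarrow> 0) (at 0)" using U0 by (simp add: eval_fps_at_0)
    hence "eventually (\<lambda>s. \<bar>\<beta> * eval_fps U s\<bar> < r) (at 0)" using r by (rule order_tendstoD(2))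
    thus ?thesis by (rule filter_leD[OF at_le, rotated]) simp
  qed
  have evD: "eventually (\<lambda>s. eval_fps D s = s ^ K * W s) (at_right 0)"
  proof -
    have "eventually (\<lambda>s::real. s \<in> {0<..<1}) (at_right 0)" by (rule eventually_at_right_real) simp
    with evU0 show ?thesis
    proof eventually_elim
      case (elim s)
      hence s: "\<bar>s\<bar> < 1" "s \<in> {0..1}" by auto
      have "eval_fps P s = (\<Sum>k. pmf p k * s ^ k)" by (simp add: eval_fps_def P_def)
      also have "\<dots> = h (\<alpha> + \<beta> * (1 - \<phi> * s) powr \<gamma>)" using assms(4) s by blast
      also have "\<alpha> + \<beta> * (1 - \<phi> * s) powr \<gamma> = x0 + \<beta> * eval_fps U s"
        using evalU[OF s(1)] by (simp add: x0_def right_diff_distrib)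
      also have "h \<dots> = (\<Sum>m<K. c m * (\<beta> * eval_fps U s) ^ m) + (\<beta> * eval_fps U s) ^ K * eval_fps S (\<beta> * eval_fps U s)"
        using elim by (intro hsplit) simp
      also have "(\<Sum>m<K. c m * (\<beta> * eval_fps U s) ^ m) = eval_fps A s" using evalA[OF s(1)] by simp
      also have "(\<beta> * eval_fps U s) ^ K * eval_fps S (\<beta> * eval_fps U s) = s ^ K * W s"
        unfolding W_def v_def evalUV[OF s(1)] by (simp add: power_mult_distrib mult_ac)
      finally have "eval_fps P s = eval_fps A s + s ^ K * W s" .
      moreover have "eval_fps D s = eval_fps P s - eval_fps A s"
        unfolding D_def using evalA[OF s(1)] lt1[OF s(1) radP] by (intro eval_fps_diff) auto
      ultimately show ?case by simp
    qed
  qed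
  have "fps_nth D k = 0"
    using fps_low_coeffs_zero[OF radD limW evD] by (simp add: K_def)
  hence "pmf p k = fps_nth A k" by (simp add: D_def P_def)
  also have "\<dots> = (\<Sum>m<K. c m * \<beta> ^ m * ((-\<phi>) ^ k * (-1) ^ m * C_coeff \<gamma> m k))"
    unfolding A_def fps_sum_nth fps_mult_left_const_nth U_def B_def Bm1_power_nth ..
  also have "\<dots> = (- \<phi>) ^ k *
           (\<Sum>m\<le>k. (- \<beta>) ^ m / fact m * (deriv ^^ m) h (\<alpha> + \<beta>) * C_coeff \<gamma> m k)"
    unfolding K_def lessThan_Suc_atMost sum_distrib_left x0_def[symmetric] dh
  proof (intro sum.cong refl)
    fix m
    have "(- \<beta>) ^ m = (-1) ^ m * \<beta> ^ m" by (rule power_minus)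
    thus "c m * \<beta> ^ m * ((- \<phi>) ^ k * (- 1) ^ m * C_coeff \<gamma> m k) =
       (- \<phi>) ^ k * ((- \<beta>) ^ m / fact m * (fact m * c m) * C_coeff \<gamma> m k)"
      by simp
  qed
  finally show "pmf p k = (- \<phi>) ^ k *
           (\<Sum>m\<le>k. (- \<beta>) ^ m / fact m * (deriv ^^ m) h (\<alpha> + \<beta>) * C_coeff \<gamma> m k)" .
qed


end
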